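(* Let $\mathcal{H}$ be a hypertree, $T$ a host tree of $\mathcal{H}$, and $B$ a basic set of $\mathcal{H}$. Let $\Gamma_{B,T}$ be the graph with vertex set $A(B)$ in which two distinct components $A_1,A_2\in A(B)$ are adjacent if and only if $T$ has an edge $e$ with $I_\mathcal{H}(e)=B$ having one endpoint in $A_1$ and the other in $A_2$. Then $\Gamma_{B,T}$ is a tree.
   Context: A hypergraph $\mathcal{H}$ has a finite vertex set $V(\mathcal{H})$ and a finite family of nonempty subsets (edges). A host tree is a tree on $V(\mathcal{H})$ in which every edge induces a connected subgraph; a hypertree is a hypergraph with a host tree. For $V'\subseteq V(\mathcal{H})$, $I_\mathcal{H}(V')$ is the intersection of all edges containing $V'$, or $V(\mathcal{H})$ if none does; for a tree edge $e=xy$, $I_\mathcal{H}(e)=I_\mathcal{H}(\{x,y\})$. For $A\subseteq V(\mathcal{H})$, $\overline{\mathcal{H}_A}$ is the hypergraph on $V(\mathcal{H})$ whose edges are the edges of $\mathcal{H}$ not containing $A$. The 2-section of a hypergraph is the graph on its vertices where two distinct vertices are adjacent iff some edge contains both. $A(B)$ is the set of connected components of the 2-section of $\overline{\mathcal{H}_B}$ containing at least one vertex of $B$. A union of sets is connected if the intersection graph of the sets is connected. $Comp(\mathcal{H})$ is the hypergraph without repeated edges on $V(\mathcal{H})$ whose edges are $V(\mathcal{H})$, all singletons, and all proper subsets obtainable from edges of $\mathcal{H}$ by repeated nonempty intersections and connected unions; a basic set is an edge of $Comp(\mathcal{H})$ with more than one vertex that is not a connected union of strictly smaller edges of $Comp(\mathcal{H})$.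 *)

theory Defs
  imports Main
begin

definition graph_rel :: "'v set set \<Rightarrow> ('v \<times> 'v) set" where
  "graph_rel F = {(x, y). x \<noteq> y \<and> {x, y} \<in> F}"

definition is_graph :: "'v set \<Rightarrow> 'v set set \<Rightarrow> bool" where
  "is_graph W F \<longleftrightarrow> (\<forall>f\<in>F. f \<subseteq> W \<and> card f = 2)"

definition connected_graph :: "'v set \<Rightarrow> 'v set set \<Rightarrow> bool" where
  "connected_graph W F \<longleftrightarrow> W \<noteq> {} \<and>
     (\<forall>x\<in>W. \<forall>y\<in>W. (x, y) \<in> (graph_rel {f\<in>F. f \<subseteq> W})\<^sup>*)"

definition is_tree :: "'v set \<Rightarrow> 'v set set \<Rightarrow> bool" where
  "is_tree W F \<longleftrightarrow> finite W \<and> is_graph W F \<and> connected_graph W F \<and>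
     (\<forall>f\<in>F. \<not> connected_graph W (F - {f}))"

definition hypergraph :: "'a set \<Rightarrow> 'a set set \<Rightarrow> bool" where
  "hypergraph V E \<longleftrightarrow> finite V \<and> finite E \<and> (\<forall>e\<in>E. e \<noteq> {} \<and> e \<subseteq> V)"

definition host_tree :: "'a set \<Rightarrow> 'a set set \<Rightarrow> 'a set set \<Rightarrow> bool" where
  "host_tree V E T \<longleftrightarrow> is_tree V T \<and> (\<forall>e\<in>E. connected_graph e {f\<in>T. f \<subseteq> e})"

definition hypertree :: "'a set \<Rightarrow> 'a set set \<Rightarrow> bool" where
  "hypertree V E \<longleftrightarrow> hypergraph V E \<and> (\<exists>T. host_tree V E T)"

definition I_H :: "'a set \<Rightarrow> 'a set set \<Rightarrow> 'a set \<Rightarrow> 'a set" where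
  "I_H V E V' = (if {e\<in>E. V' \<subseteq> e} = {} then V else \<Inter>{e\<in>E. V' \<subseteq> e})"

definition edges_not_containing :: "'a set set \<Rightarrow> 'a set \<Rightarrow> 'a set set" where
  "edges_not_containing E A = {e\<in>E. \<not> A \<subseteq> e}"

definition two_section_rel :: "'a set \<Rightarrow> 'a set set \<Rightarrow> ('a \<times> 'a) set" where
  "two_section_rel V E = {(x, y). x \<in> V \<and> y \<in> V \<and> x \<noteq> y \<and> (\<exists>e\<in>E. x \<in> e \<and> y \<in> e)}"

definition two_section_components :: "'a set \<Rightarrow> 'a set set \<Rightarrow> 'a set set" where
  "two_section_components V E = (\<lambda>x. {y\<in>V. (x, y) \<in> (two_section_rel V E)\<^sup>*}) ` V"

definition A_of :: "'a set \<Rightarrow> 'a set set \<Rightarrow> 'a set \<Rightarrow> 'a set set" where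
  "A_of V E B = {C \<in> two_section_components V (edges_not_containing E B). C \<inter> B \<noteq> {}}"

text \<open>Connected union: the intersection graph of the family is connected.\<close>
definition intersection_graph_edges :: "'a set set \<Rightarrow> 'a set set set" where
  "intersection_graph_edges S = {{X, Y} | X Y. X \<in> S \<and> Y \<in> S \<and> X \<noteq> Y \<and> X \<inter> Y \<noteq> {}}"

definition connected_family :: "'a set set \<Rightarrow> bool" where
  "connected_family S \<longleftrightarrow> finite S \<and> connected_graph S (intersection_graph_edges S)"

inductive_set comp_gen :: "'a set set \<Rightarrow> 'a set set" for E :: "'a set set" where
  base: "e \<in> E \<Longrightarrow> e \<in> comp_gen E"
| inter: "X \<in> comp_gen E \<Longrightarrow> Y \<in> comp_gen E \<Longrightarrow> X \<inter> Y \<noteq> {} \<Longrightarrow> X \<inter> Y \<in> comp_gen E"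
| union: "(\<And>X. X \<in> S \<Longrightarrow> X \<in> comp_gen E) \<Longrightarrow> connected_family S \<Longrightarrow> \<Union>S \<in> comp_gen E"

definition Comp_edges :: "'a set \<Rightarrow> 'a set set \<Rightarrow> 'a set set" where
  "Comp_edges V E = {V} \<union> {{v} | v. v \<in> V} \<union> {X \<in> comp_gen E. X \<subset> V}"

definition basic_set :: "'a set \<Rightarrow> 'a set set \<Rightarrow> 'a set \<Rightarrow> bool" where
  "basic_set V E B \<longleftrightarrow> B \<in> Comp_edges V E \<and> card B > 1 \<and>
     \<not> (\<exists>S. S \<subseteq> {Y \<in> Comp_edges V E. Y \<subset> B} \<and> connected_family S \<and> \<Union>S = B)"

definition Gamma_edges :: "'a set \<Rightarrow> 'a set set \<Rightarrow> 'a set \<Rightarrow> 'a set set \<Rightarrow> 'a set set set" where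
  "Gamma_edges V E B T = {{A1, A2} | A1 A2. A1 \<in> A_of V E B \<and> A2 \<in> A_of V E B \<and> A1 \<noteq> A2 \<and>
      (\<exists>x y. {x, y} \<in> T \<and> I_H V E {x, y} = B \<and> x \<in> A1 \<and> y \<in> A2)}"

end

theory Submission
  imports Defs
begin

lemma graph_rel_sym: "(x,y) \<in> graph_rel F \<Longrightarrow> (y,x) \<in> graph_rel F"
  unfolding graph_rel_def by (auto simp: insert_commute)

lemma graph_rel_rtrancl_sym: "(x,y) \<in> (graph_rel F)\<^sup>* \<Longrightarrow> (y,x) \<in> (graph_rel F)\<^sup>*"
  by (induct rule: rtrancl_induct) (auto intro: converse_rtrancl_into_rtrancl graph_rel_sym)

lemma walk_stays: "(a,w) \<in> (graph_rel {t\<in>T. t\<subseteq>U})\<^sup>* \<Longrightarrow> a \<in> U \<Longrightarrow> w \<in> U"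
  by (induct rule: rtrancl_induct) (auto simp: graph_rel_def)

lemma tree_cut:
  assumes "is_tree W T" "{x,y} \<in> T"
  shows "(x,y) \<notin> (graph_rel (T - {{x,y}}))\<^sup>*"
proof
  assume h: "(x,y) \<in> (graph_rel (T - {{x,y}}))\<^sup>*"
  let ?T' = "T - {{x,y}}"
  have "is_graph W T" using assms(1) unfolding is_tree_def by (elim conjE)
  then have sub: "T \<subseteq> Pow W" unfolding is_graph_def by blast
  have "graph_rel T \<subseteq> (graph_rel ?T')\<^sup>*"
  proof
    fix p assume "p \<in> graph_rel T"
    then obtain a b where p: "p = (a,b)" "a \<noteq> b" "{a,b} \<in> T" by (auto simp: graph_rel_def)
    show "p \<in> (graph_rel ?T')\<^sup>*"
    proof (cases "{a,b} = {x,y}")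
      case True
      then have "(a = x \<and> b = y) \<or> (a = y \<and> b = x)" by (auto simp: doubleton_eq_iff)
      then show ?thesis
      proof (elim disjE conjE)
        assume "a = x" "b = y" then show ?thesis using h p(1) by simp
      next
        assume "a = y" "b = x" then show ?thesis using graph_rel_rtrancl_sym[OF h] p(1) by simp
      qed
    next
      case False
      then have "(a,b) \<in> graph_rel ?T'" using p by (auto simp: graph_rel_def)
      then show ?thesis unfolding p(1) by (rule r_into_rtrancl)
    qed
  qed
  then have "(graph_rel T)\<^sup>* \<subseteq> (graph_rel ?T')\<^sup>*" by (rule rtrancl_subset_rtrancl)
  moreover have "{f\<in>T. f \<subseteq> W} = T" using sub by auto
  moreover have "{f\<in>?T'. f \<subseteq> W} = ?T'" using sub by auto
  ultimately have "connected_graph W ?T'"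
  proof -
    assume s: "(graph_rel T)\<^sup>* \<subseteq> (graph_rel ?T')\<^sup>*" and e1: "{f\<in>T. f \<subseteq> W} = T"
      and e2: "{f\<in>?T'. f \<subseteq> W} = ?T'"
    have cg: "connected_graph W T" using assms(1) unfolding is_tree_def by (elim conjE)
    then have "W \<noteq> {}" "\<forall>u\<in>W. \<forall>v\<in>W. (u,v) \<in> (graph_rel T)\<^sup>*"
      unfolding connected_graph_def e1 by simp_all
    then show ?thesis unfolding connected_graph_def e2 using s by blast
  qed
  moreover have "\<forall>f\<in>T. \<not> connected_graph W (T - {f})" using assms(1) unfolding is_tree_def by (elim conjE)
  ultimately show False using assms(2) by blast
qed

lemma tree_inter_connected:
  assumes tree: "is_tree W T"
  and cX: "\<forall>a\<in>X. \<forall>b\<in>X. (a,b) \<in> (graph_rel {t\<in>T. t \<subseteq> X})\<^sup>*"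
  and cY: "\<forall>a\<in>Y. \<forall>b\<in>Y. (a,b) \<in> (graph_rel {t\<in>T. t \<subseteq> Y})\<^sup>*"
  and a: "a \<in> X \<inter> Y" and b: "b \<in> X \<inter> Y"
  shows "(a,b) \<in> (graph_rel {t\<in>T. t \<subseteq> X \<inter> Y})\<^sup>*"
proof (rule ccontr)
  assume nb: "(a,b) \<notin> (graph_rel {t\<in>T. t \<subseteq> X \<inter> Y})\<^sup>*"
  define Z where "Z = {w. (a,w) \<in> (graph_rel {t\<in>T. t \<subseteq> X \<inter> Y})\<^sup>*}"
  have bZ: "b \<notin> Z" using nb Z_def by auto
  have aZ: "a \<in> Z" by (simp add: Z_def)
  have ZXY: "Z \<subseteq> X \<inter> Y" using walk_stays[of a _ T "X \<inter> Y"] a unfolding Z_def by blast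
  define Cr where "Cr = (\<exists>p q. p \<in> Z \<and> q \<in> X - Z \<and> {p,q} \<in> T \<and> (q,b) \<in> (graph_rel (T - {{p,q}}))\<^sup>*)"
  have key: "(w \<in> Z \<longrightarrow> Cr) \<and> (w \<notin> Z \<longrightarrow> (w,b) \<in> (graph_rel {t\<in>T. t \<subseteq> X - Z})\<^sup>* \<or> Cr)"
    if "(w,b) \<in> (graph_rel {t\<in>T. t \<subseteq> X})\<^sup>*" for w
    using that
  proof (induct rule: converse_rtrancl_induct)
    case base
    then show ?case using bZ by auto
  next
    case (step w w')
    from step(1) have ww: "w \<noteq> w'" "{w,w'} \<in> T" "{w,w'} \<subseteq> X" by (auto simp: graph_rel_def)
    show ?case
    proof (cases Cr)
      case True then show ?thesis by simp
    next
      case False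
      then have w'n: "w' \<notin> Z" and w'b: "(w',b) \<in> (graph_rel {t\<in>T. t \<subseteq> X - Z})\<^sup>*" using step(3) by auto
      show ?thesis
      proof (cases "w \<in> Z")
        case True
        have "graph_rel {t\<in>T. t \<subseteq> X - Z} \<subseteq> graph_rel (T - {{w,w'}})" using True by (auto simp: graph_rel_def doubleton_eq_iff)
        then have "(w',b) \<in> (graph_rel (T - {{w,w'}}))\<^sup>*" using w'b rtrancl_mono by blast
        then have Cr unfolding Cr_def using True w'n ww by blast
        then show ?thesis using False by simp
      next
        case False2: False
        have "(w,w') \<in> graph_rel {t\<in>T. t \<subseteq> X - Z}" using ww False2 w'n by (auto simp: graph_rel_def)
        then show ?thesis using w'b False2 by (meson converse_rtrancl_into_rtrancl)
      qed
    qed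
  qed
  have Cr using key[of a] cX a b aZ by blast
  then obtain p q where pq: "p \<in> Z" "q \<in> X - Z" "{p,q} \<in> T" "(q,b) \<in> (graph_rel (T - {{p,q}}))\<^sup>*"
    unfolding Cr_def by blast
  have qY: "q \<notin> Y"
  proof
    assume "q \<in> Y"
    then have "(p,q) \<in> graph_rel {t\<in>T. t \<subseteq> X \<inter> Y}" using pq ZXY by (auto simp: graph_rel_def)
    then have "q \<in> Z" using pq(1) unfolding Z_def by (auto intro: rtrancl_into_rtrancl)
    then show False using pq by auto
  qed
  have s1: "graph_rel {t\<in>T. t \<subseteq> Y} \<subseteq> graph_rel (T - {{p,q}})" using qY by (auto simp: graph_rel_def doubleton_eq_iff)
  have s2: "graph_rel {t\<in>T. t \<subseteq> X \<inter> Y} \<subseteq> graph_rel (T - {{p,q}})" using qY by (auto simp: graph_rel_def doubleton_eq_iff)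
  have "(b,a) \<in> (graph_rel (T - {{p,q}}))\<^sup>*" using cY a b rtrancl_mono[OF s1] by blast
  moreover have "(a,p) \<in> (graph_rel (T - {{p,q}}))\<^sup>*" using pq(1) rtrancl_mono[OF s2] unfolding Z_def by blast
  ultimately have "(q,p) \<in> (graph_rel (T - {{q,p}}))\<^sup>*" using pq(4) by (simp add: insert_commute)
  moreover have "{q,p} \<in> T" using pq(3) by (simp add: insert_commute)
  ultimately show False using tree_cut[OF tree] by blast
qed

lemma IG_step:
  "(X,Y) \<in> graph_rel {f \<in> intersection_graph_edges S. f \<subseteq> S} \<Longrightarrow> X \<inter> Y \<noteq> {} \<and> Y \<in> S"
  by (auto simp: graph_rel_def intersection_graph_edges_def doubleton_eq_iff)

lemma comp_gen_props:
  assumes hg: "hypergraph V E" and ht: "host_tree V E T" and X: "X \<in> comp_gen E"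
  shows "X \<noteq> {} \<and> X \<subseteq> V \<and> (\<forall>a\<in>X. \<forall>b\<in>X. (a,b) \<in> (graph_rel {t\<in>T. t \<subseteq> X})\<^sup>*) \<and>
    (\<forall>t\<in>T. t \<subseteq> X \<longrightarrow> (\<exists>e\<in>E. t \<subseteq> e) \<and> \<Inter>{e\<in>E. t \<subseteq> e} \<subseteq> X)"
  using X
proof (induct rule: comp_gen.induct)
  case (base e)
  have "connected_graph e {f\<in>T. f \<subseteq> e}" using ht base unfolding host_tree_def by auto
  then have c: "\<forall>a\<in>e. \<forall>b\<in>e. (a,b) \<in> (graph_rel {t\<in>T. t \<subseteq> e})\<^sup>*" unfolding connected_graph_def by auto
  have ne: "e \<noteq> {}" "e \<subseteq> V" using hg base unfolding hypergraph_def by auto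
  have b3: "\<forall>t\<in>T. t \<subseteq> e \<longrightarrow> (\<exists>e'\<in>E. t \<subseteq> e') \<and> \<Inter>{e'\<in>E. t \<subseteq> e'} \<subseteq> e"
  proof (intro ballI impI conjI)
    fix t assume "t \<subseteq> e"
    then have "e \<in> {e'\<in>E. t \<subseteq> e'}" using base by simp
    then show "\<exists>e'\<in>E. t \<subseteq> e'" "\<Inter>{e'\<in>E. t \<subseteq> e'} \<subseteq> e" by (blast, rule Inter_lower)
  qed
  show ?case using c ne b3 by (intro conjI)
next
  case (inter X Y)
  have tree: "is_tree V T" using ht unfolding host_tree_def by auto
  have cX: "\<forall>a\<in>X. \<forall>b\<in>X. (a,b) \<in> (graph_rel {t\<in>T. t \<subseteq> X})\<^sup>*" using inter(2) by (elim conjE)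
  have cY: "\<forall>a\<in>Y. \<forall>b\<in>Y. (a,b) \<in> (graph_rel {t\<in>T. t \<subseteq> Y})\<^sup>*" using inter(4) by (elim conjE)
  have c: "\<forall>a\<in>X \<inter> Y. \<forall>b\<in>X \<inter> Y. (a,b) \<in> (graph_rel {t\<in>T. t \<subseteq> X \<inter> Y})\<^sup>*"
    using tree_inter_connected[OF tree cX cY] by blast
  have sV: "X \<inter> Y \<subseteq> V" using inter(2) by blast
  have b3: "\<forall>t\<in>T. t \<subseteq> X \<inter> Y \<longrightarrow> (\<exists>e\<in>E. t \<subseteq> e) \<and> \<Inter>{e\<in>E. t \<subseteq> e} \<subseteq> X \<inter> Y"
  proof (intro ballI impI)
    fix t assume t: "t \<in> T" "t \<subseteq> X \<inter> Y"
    have hX: "(\<exists>e\<in>E. t \<subseteq> e) \<and> \<Inter>{e\<in>E. t \<subseteq> e} \<subseteq> X" using inter(2) t by auto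
    have hY: "\<Inter>{e\<in>E. t \<subseteq> e} \<subseteq> Y" using inter(4) t by auto
    show "(\<exists>e\<in>E. t \<subseteq> e) \<and> \<Inter>{e\<in>E. t \<subseteq> e} \<subseteq> X \<inter> Y" using hX hY by auto
  qed
  show ?case using inter(5) sV c b3 by (intro conjI)
next
  case (union S)
  have tree: "is_tree V T" using ht unfolding host_tree_def by auto
  have cf: "finite S" "S \<noteq> {}"
    "\<forall>X\<in>S. \<forall>Y\<in>S. (X,Y) \<in> (graph_rel {f \<in> intersection_graph_edges S. f \<subseteq> S})\<^sup>*"
    using union(3) unfolding connected_family_def connected_graph_def by auto
  have IHc: "\<forall>a\<in>Z. \<forall>b\<in>Z. (a,b) \<in> (graph_rel {t\<in>T. t \<subseteq> Z})\<^sup>*" if "Z \<in> S" for Z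
    using union(2)[OF that] by (elim conjE)
  have IHb: "Z \<noteq> {} \<and> Z \<subseteq> V" if "Z \<in> S" for Z
    using union(2)[OF that] by (elim conjE) simp
  have IH3: "\<forall>t\<in>T. t \<subseteq> Z \<longrightarrow> (\<exists>e\<in>E. t \<subseteq> e) \<and> \<Inter>{e\<in>E. t \<subseteq> e} \<subseteq> Z" if "Z \<in> S" for Z
    using union(2)[OF that] by (elim conjE)
  define RS where "RS = (\<Union>Z\<in>S. graph_rel {t\<in>T. t \<subseteq> Z})"
  have chain: "\<forall>a\<in>X. \<forall>b\<in>Y. (a,b) \<in> RS\<^sup>*"
    if "(X,Y) \<in> (graph_rel {f \<in> intersection_graph_edges S. f \<subseteq> S})\<^sup>*" "X \<in> S" for X Y
    using that(1)
  proof (induct rule: rtrancl_induct)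
    case base
    have "graph_rel {t\<in>T. t \<subseteq> X} \<subseteq> RS" using that(2) unfolding RS_def by blast
    then show ?case using IHc[OF that(2)] rtrancl_mono by blast
  next
    case (step Y Y')
    from IG_step[OF step(2)] obtain z where z: "z \<in> Y" "z \<in> Y'" and Y': "Y' \<in> S" by blast
    have sub: "graph_rel {t\<in>T. t \<subseteq> Y'} \<subseteq> RS" using Y' unfolding RS_def by blast
    show ?case
    proof (intro ballI)
      fix a b assume ab: "a \<in> X" "b \<in> Y'"
      have "(a,z) \<in> RS\<^sup>*" using step(3) ab z by blast
      moreover have "(z,b) \<in> (graph_rel {t\<in>T. t \<subseteq> Y'})\<^sup>*" using IHc[OF Y'] z ab by blast
      then have "(z,b) \<in> RS\<^sup>*" using rtrancl_mono[OF sub] by blast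
      ultimately show "(a,b) \<in> RS\<^sup>*" by (rule rtrancl_trans)
    qed
  qed
  have conn: "\<forall>a\<in>\<Union>S. \<forall>b\<in>\<Union>S. (a,b) \<in> RS\<^sup>*"
  proof (intro ballI)
    fix a b assume "a \<in> \<Union>S" "b \<in> \<Union>S"
    then obtain X Y where "X \<in> S" "Y \<in> S" "a \<in> X" "b \<in> Y" by blast
    then show "(a,b) \<in> RS\<^sup>*" using chain[of X Y] cf(3) by blast
  qed
  have RSsub: "RS \<subseteq> graph_rel {t\<in>T. t \<subseteq> \<Union>S}" unfolding RS_def graph_rel_def by auto
  have c: "\<forall>a\<in>\<Union>S. \<forall>b\<in>\<Union>S. (a,b) \<in> (graph_rel {t\<in>T. t \<subseteq> \<Union>S})\<^sup>*"
    using conn rtrancl_mono[OF RSsub] by blast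
  have ne: "\<Union>S \<noteq> {}" using cf(2) IHb by blast
  have sV: "\<Union>S \<subseteq> V" using IHb by blast
  have b3: "\<forall>t\<in>T. t \<subseteq> \<Union>S \<longrightarrow> (\<exists>e\<in>E. t \<subseteq> e) \<and> \<Inter>{e\<in>E. t \<subseteq> e} \<subseteq> \<Union>S"
  proof (intro ballI impI)
    fix t assume t: "t \<in> T" "t \<subseteq> \<Union>S"
    show "(\<exists>e\<in>E. t \<subseteq> e) \<and> \<Inter>{e\<in>E. t \<subseteq> e} \<subseteq> \<Union>S"
    proof (cases "\<exists>Z\<in>S. t \<subseteq> Z")
      case True
      then obtain Z where Z: "Z \<in> S" "t \<subseteq> Z" by blast
      then have "(\<exists>e\<in>E. t \<subseteq> e) \<and> \<Inter>{e\<in>E. t \<subseteq> e} \<subseteq> Z" using IH3[OF Z(1)] t(1) by blast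
      then show ?thesis using Z by blast
    next
      case False
      have "card t = 2" using tree t unfolding is_tree_def is_graph_def by auto
      then obtain x y where xy: "t = {x,y}" "x \<noteq> y" by (auto simp: card_2_iff)
      have xyS: "x \<in> \<Union>S" "y \<in> \<Union>S" using xy(1) t(2) by auto
      have "(x,y) \<in> RS\<^sup>*" using conn xyS by blast
      moreover have "RS \<subseteq> graph_rel (T - {t})" using False unfolding RS_def graph_rel_def by auto
      ultimately have "(x,y) \<in> (graph_rel (T - {t}))\<^sup>*" using rtrancl_mono by blast
      then have "(x,y) \<in> (graph_rel (T - {{x,y}}))\<^sup>*" by (simp add: xy(1))
      moreover have "{x,y} \<in> T" using t(1) by (simp add: xy(1))
      ultimately show ?thesis using tree_cut[OF tree] by blast
    qed
  qed
  show ?case using ne sV c b3 by (intro conjI)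
qed

theorem mainTheorem15:
  fixes V :: "'a set" and E :: "'a set set" and T :: "'a set set" and B :: "'a set"
  assumes "hypertree V E"
    and "host_tree V E T"
    and "basic_set V E B"
  shows "is_tree (A_of V E B) (Gamma_edges V E B T)"
proof -
  have hg: "hypergraph V E" using assms(1) unfolding hypertree_def by (elim conjE)
  have ht: "host_tree V E T" by fact
  have tree: "is_tree V T" using ht unfolding host_tree_def by (elim conjE)
  have finV: "finite V" using hg unfolding hypergraph_def by (elim conjE)
  have Tsub: "t \<subseteq> V \<and> card t = 2" if "t \<in> T" for t
    using tree that unfolding is_tree_def is_graph_def by blast
  have Tne: "x \<noteq> y" if "{x,y} \<in> T" for x y
  proof
    assume "x = y"
    then have "card {x,y} = 1" by simp
    then show False using Tsub[OF that] by simp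
  qed
  have EV: "e \<subseteq> V" if "e \<in> E" for e using hg that unfolding hypergraph_def by blast
  have Econn: "\<forall>a\<in>e. \<forall>b\<in>e. (a,b) \<in> (graph_rel {t\<in>T. t \<subseteq> e})\<^sup>*" if "e \<in> E" for e
    using comp_gen_props[OF hg ht comp_gen.base[OF that]] by (elim conjE)
  have Bc: "B \<in> Comp_edges V E" "card B > 1" using assms(3) unfolding basic_set_def by auto
  have Bcases: "B = V \<or> (B \<in> comp_gen E \<and> B \<subset> V)"
  proof -
    have "B = V \<or> (\<exists>v. B = {v} \<and> v \<in> V) \<or> (B \<in> comp_gen E \<and> B \<subset> V)"
      using Bc(1) unfolding Comp_edges_def by blast
    moreover have "\<not> (\<exists>v. B = {v})" using Bc(2) by auto
    ultimately show ?thesis by blast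
  qed
  have BV: "B \<subseteq> V" using Bcases by blast
  have Bne: "B \<noteq> {}" using Bc(2) by auto
  have Bconn: "\<forall>a\<in>B. \<forall>b\<in>B. (a,b) \<in> (graph_rel {t\<in>T. t \<subseteq> B})\<^sup>*"
  proof (cases "B = V")
    case True
    have "connected_graph V T" using tree unfolding is_tree_def by (elim conjE)
    then show ?thesis unfolding connected_graph_def True by (elim conjE)
  next
    case False
    then have "B \<in> comp_gen E" using Bcases by blast
    then show ?thesis using comp_gen_props[OF hg ht] by blast
  qed
  have BI: "I_H V E t = B" if t: "t \<in> T" "t \<subseteq> B" and all: "\<forall>e\<in>E. t \<subseteq> e \<longrightarrow> B \<subseteq> e" for t
  proof (cases "{e\<in>E. t \<subseteq> e} = {}")
    case True
    have "B = V"
    proof (rule ccontr)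
      assume "B \<noteq> V"
      then have "B \<in> comp_gen E" using Bcases by blast
      then have "\<exists>e\<in>E. t \<subseteq> e" using comp_gen_props[OF hg ht] t by blast
      then show False using True by blast
    qed
    then show ?thesis using True unfolding I_H_def by simp
  next
    case False
    then obtain e0 where e0: "e0 \<in> E" "t \<subseteq> e0" by blast
    have sup: "B \<subseteq> \<Inter>{e\<in>E. t \<subseteq> e}" using all by blast
    have sub: "\<Inter>{e\<in>E. t \<subseteq> e} \<subseteq> B"
    proof (cases "B = V")
      case True
      have "\<Inter>{e\<in>E. t \<subseteq> e} \<subseteq> e0" using e0 by (intro Inter_lower) simp
      then show ?thesis using EV[OF e0(1)] True by blast
    next
      case False
      then have "B \<in> comp_gen E" using Bcases by blast
      then show ?thesis using comp_gen_props[OF hg ht] t by blast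
    qed
    have "I_H V E t = \<Inter>{e\<in>E. t \<subseteq> e}" unfolding I_H_def using False by (simp only: if_False)
    then show ?thesis using sup sub by (simp only:)
  qed
  define F where "F = edges_not_containing E B"
  have FE: "F \<subseteq> E" unfolding F_def edges_not_containing_def by blast
  define R2 where "R2 = two_section_rel V F"
  define cls where "cls x = {y\<in>V. (x,y) \<in> R2\<^sup>*}" for x
  have R2sym: "sym R2" unfolding R2_def two_section_rel_def sym_def by blast
  have R2rs: "(y,x) \<in> R2\<^sup>*" if "(x,y) \<in> R2\<^sup>*" for x y
    using sym_rtrancl[OF R2sym] that unfolding sym_def by blast
  have comps: "two_section_components V F = cls ` V"
    unfolding two_section_components_def cls_def R2_def by simp
  define AB where "AB = A_of V E B"
  have ABeq: "AB = {C \<in> cls ` V. C \<inter> B \<noteq> {}}" unfolding AB_def A_of_def F_def[symmetric] comps by simp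
  have cls_self: "x \<in> cls x" if "x \<in> V" for x using that unfolding cls_def by simp
  have cls_eq: "cls y = cls x" if "x \<in> V" "y \<in> cls x" for x y
  proof
    have xy: "(x,y) \<in> R2\<^sup>*" using that unfolding cls_def by simp
    show "cls y \<subseteq> cls x" unfolding cls_def using xy by (auto intro: rtrancl_trans)
    show "cls x \<subseteq> cls y" unfolding cls_def using R2rs[OF xy] by (auto intro: rtrancl_trans)
  qed
  have comp_at: "D = cls z" if Dv: "D \<in> cls ` V" and zD: "z \<in> D" for D z
  proof -
    obtain x where x: "x \<in> V" "D = cls x" using Dv by blast
    show ?thesis using cls_eq[OF x(1)] zD x(2) by simp
  qed
  define RF where "RF = (\<Union>f\<in>F. graph_rel {t\<in>T. t \<subseteq> f})"
  have R2RF: "R2 \<subseteq> RF\<^sup>*"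
  proof
    fix p assume "p \<in> R2"
    then obtain x y f where p: "p = (x,y)" "f \<in> F" "x \<in> f" "y \<in> f"
      unfolding R2_def two_section_rel_def by blast
    have "(x,y) \<in> (graph_rel {t\<in>T. t \<subseteq> f})\<^sup>*" using Econn[of f] FE p by blast
    moreover have "graph_rel {t\<in>T. t \<subseteq> f} \<subseteq> RF" unfolding RF_def using p(2) by blast
    ultimately show "p \<in> RF\<^sup>*" unfolding p(1) using rtrancl_mono by blast
  qed
  have cls_RF: "(u,v) \<in> RF\<^sup>*" if "D \<in> cls ` V" "u \<in> D" "v \<in> D" for D u v
  proof -
    have "D = cls u" using comp_at that by blast
    then have "(u,v) \<in> R2\<^sup>*" using that(3) unfolding cls_def by simp
    then show ?thesis using rtrancl_subset_rtrancl[OF R2RF] by blast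
  qed
  have noF: "\<not> t \<subseteq> f" if "t \<in> T" "I_H V E t = B" "f \<in> F" for t f
  proof
    assume tf: "t \<subseteq> f"
    have fE: "f \<in> E" "\<not> B \<subseteq> f" using that(3) unfolding F_def edges_not_containing_def by auto
    then have "f \<in> {e\<in>E. t \<subseteq> e}" using tf by simp
    then have ne: "{e\<in>E. t \<subseteq> e} \<noteq> {}" and "\<Inter>{e\<in>E. t \<subseteq> e} \<subseteq> f" by (blast, rule Inter_lower)
    moreover have "I_H V E t = \<Inter>{e\<in>E. t \<subseteq> e}" unfolding I_H_def using ne by (simp only: if_False)
    ultimately have "I_H V E t \<subseteq> f" by (simp only:)
    then show False using that(2) fE by simp
  qed
  have RF_avoid: "RF \<subseteq> graph_rel (T - {t})" if "\<forall>f\<in>F. \<not> t \<subseteq> f" for t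
    unfolding RF_def graph_rel_def using that by auto
  define G where "G = Gamma_edges V E B T"
  have Gedge: "\<exists>A1 A2 x y. g = {A1,A2} \<and> A1 \<in> AB \<and> A2 \<in> AB \<and> A1 \<noteq> A2 \<and> {x,y} \<in> T \<and>
      I_H V E {x,y} = B \<and> x \<in> A1 \<and> y \<in> A2" if "g \<in> G" for g
    using that unfolding G_def Gamma_edges_def AB_def by blast
  have Gsub: "g \<subseteq> AB \<and> card g = 2" if gG: "g \<in> G" for g
  proof -
    obtain A1 A2 where h: "g = {A1,A2}" "A1 \<in> AB" "A2 \<in> AB" "A1 \<noteq> A2"
      using Gedge[OF gG] by blast
    then show ?thesis by simp
  qed
  have ABsub: "AB \<subseteq> cls ` V" unfolding ABeq by blast
  have finAB: "finite AB" using ABsub finV finite_surj by blast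
  have isg: "is_graph AB G" unfolding is_graph_def using Gsub by blast
  have Gf: "{f\<in>G. f \<subseteq> AB} = G" using Gsub by blast
  have Gf2: "{f\<in>G - {g}. f \<subseteq> AB} = G - {g}" for g using Gsub by blast
  have walkG: "(cls b1, cls w) \<in> (graph_rel G)\<^sup>*" if "(b1,w) \<in> (graph_rel {t\<in>T. t \<subseteq> B})\<^sup>*" for b1 w
    using that
  proof (induct rule: rtrancl_induct)
    case base
    then show ?case by simp
  next
    case (step w w')
    have ww: "w \<noteq> w'" "{w,w'} \<in> T" "{w,w'} \<subseteq> B" using step(2) unfolding graph_rel_def by auto
    show ?case
    proof (cases "cls w' = cls w")
      case True
      then show ?thesis using step(3) by simp
    next
      case False
      have all: "\<forall>e\<in>E. {w,w'} \<subseteq> e \<longrightarrow> B \<subseteq> e"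
      proof (intro ballI impI)
        fix e assume e: "e \<in> E" "{w,w'} \<subseteq> e"
        show "B \<subseteq> e"
        proof (rule ccontr)
          assume "\<not> B \<subseteq> e"
          then have "e \<in> F" unfolding F_def edges_not_containing_def using e by simp
          then have "(w,w') \<in> R2" unfolding R2_def two_section_rel_def using e ww BV by blast
          then have "w' \<in> cls w" unfolding cls_def using ww BV by auto
          then have "cls w' = cls w" using cls_eq ww BV by blast
          then show False using False by simp
        qed
      qed
      have I: "I_H V E {w,w'} = B" using BI[OF ww(2) ww(3) all] .
      have wV: "w \<in> V" "w' \<in> V" using ww BV by auto
      have inAB: "cls w \<in> AB" "cls w' \<in> AB" unfolding ABeq using wV cls_self ww(3) by auto
      have "{cls w, cls w'} \<in> G" unfolding G_def Gamma_edges_def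
        using inAB False I ww(2) cls_self wV unfolding AB_def by blast
      then have "(cls w, cls w') \<in> graph_rel G" unfolding graph_rel_def using False by auto
      with step(3) show ?thesis by (rule rtrancl_into_rtrancl)
    qed
  qed
  have conn: "connected_graph AB G"
    unfolding connected_graph_def Gf
  proof (intro conjI ballI)
    obtain b where b: "b \<in> B" using Bne by blast
    then have "b \<in> V" using BV by blast
    then have "cls b \<in> AB" unfolding ABeq using b cls_self by blast
    then show "AB \<noteq> {}" by blast
  next
    fix C1 C2 assume C: "C1 \<in> AB" "C2 \<in> AB"
    obtain b1 where b1: "b1 \<in> C1" "b1 \<in> B" using C(1) unfolding ABeq by blast
    obtain b2 where b2: "b2 \<in> C2" "b2 \<in> B" using C(2) unfolding ABeq by blast
    have c1: "C1 \<in> cls ` V" using C(1) ABsub by blast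
    have c2: "C2 \<in> cls ` V" using C(2) ABsub by blast
    have e1: "C1 = cls b1" by (rule comp_at[OF c1 b1(1)])
    have e2: "C2 = cls b2" by (rule comp_at[OF c2 b2(1)])
    have "(b1,b2) \<in> (graph_rel {t\<in>T. t \<subseteq> B})\<^sup>*" using Bconn b1 b2 by blast
    then show "(C1,C2) \<in> (graph_rel G)\<^sup>*" unfolding e1 e2 by (rule walkG)
  qed
  have minimal: "\<not> connected_graph AB (G - {g})" if g: "g \<in> G" for g
  proof
    assume cg: "connected_graph AB (G - {g})"
    obtain A1 A2 x y where gd: "g = {A1,A2}" "A1 \<in> AB" "A2 \<in> AB" "A1 \<noteq> A2" "{x,y} \<in> T"
      "I_H V E {x,y} = B" "x \<in> A1" "y \<in> A2" using Gedge[OF g] by blast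
    have A12: "(A1,A2) \<in> (graph_rel (G - {g}))\<^sup>*" using cg gd(2,3) unfolding connected_graph_def Gf2 by blast
    define av where "av = graph_rel (T - {{x,y}})"
    have RFav: "RF \<subseteq> av" unfolding av_def using RF_avoid noF[OF gd(5) gd(6)] by blast
    have RFav': "(u,v) \<in> av\<^sup>*" if "(u,v) \<in> RF\<^sup>*" for u v using that rtrancl_mono[OF RFav] by blast
    have claim: "D \<in> AB \<and> (\<forall>u\<in>A1. \<forall>v\<in>D. (u,v) \<in> av\<^sup>*)" if "(A1,D) \<in> (graph_rel (G - {g}))\<^sup>*" for D
      using that
    proof (induct rule: rtrancl_induct)
      case base
      have A1c: "A1 \<in> cls ` V" using gd(2) ABsub by blast
      show ?case
      proof (intro conjI ballI)
        show "A1 \<in> AB" by (rule gd(2))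
      next
        fix u v assume "u \<in> A1" "v \<in> A1"
        then show "(u,v) \<in> av\<^sup>*" using RFav' cls_RF[OF A1c] by blast
      qed
    next
      case (step D D')
      have DD: "D \<noteq> D'" "{D,D'} \<in> G" "{D,D'} \<noteq> g" using step(2) unfolding graph_rel_def by auto
      obtain P1 P2 p q where pd: "{D,D'} = {P1,P2}" "P1 \<in> AB" "P2 \<in> AB" "{p,q} \<in> T"
        "I_H V E {p,q} = B" "p \<in> P1" "q \<in> P2" using Gedge[OF DD(2)] by blast
      have "\<exists>p q. p \<in> D \<and> q \<in> D' \<and> {p,q} \<in> T \<and> D' \<in> AB"
      proof (cases "D = P1 \<and> D' = P2")
        case True then show ?thesis using pd by blast
      next
        case False
        then have "D = P2" "D' = P1" using pd(1) by (auto simp: doubleton_eq_iff)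
        then show ?thesis using pd by (metis insert_commute)
      qed
      then obtain p' q' where pq: "p' \<in> D" "q' \<in> D'" "{p',q'} \<in> T" "D' \<in> AB" by blast
      have ne: "{p',q'} \<noteq> {x,y}"
      proof
        assume eq: "{p',q'} = {x,y}"
        have Dc: "D \<in> cls ` V" "D' \<in> cls ` V" using step(3) pq(4) ABsub by auto
        have Ac: "A1 \<in> cls ` V" "A2 \<in> cls ` V" using gd ABsub by auto
        from eq have "(p' = x \<and> q' = y) \<or> (p' = y \<and> q' = x)" by (auto simp: doubleton_eq_iff)
        then have "{D,D'} = g"
        proof (elim disjE conjE)
          assume "p' = x" "q' = y"
          then have m: "x \<in> D" "y \<in> D'" using pq by simp_all
          have "D = cls x" "A1 = cls x" "D' = cls y" "A2 = cls y"
            using comp_at[OF Dc(1) m(1)] comp_at[OF Ac(1) gd(7)] comp_at[OF Dc(2) m(2)] comp_at[OF Ac(2) gd(8)]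
            by simp_all
          then show "{D,D'} = g" using gd(1) by simp
        next
          assume "p' = y" "q' = x"
          then have m: "y \<in> D" "x \<in> D'" using pq by simp_all
          have "D = cls y" "A2 = cls y" "D' = cls x" "A1 = cls x"
            using comp_at[OF Dc(1) m(1)] comp_at[OF Ac(2) gd(8)] comp_at[OF Dc(2) m(2)] comp_at[OF Ac(1) gd(7)]
            by simp_all
          then show "{D,D'} = g" using gd(1) by (simp add: insert_commute)
        qed
        then show False using DD(3) by simp
      qed
      have pqav: "(p',q') \<in> av" unfolding av_def graph_rel_def using ne pq(3) Tne[OF pq(3)] by simp
      have all: "\<forall>u\<in>A1. \<forall>v\<in>D'. (u,v) \<in> av\<^sup>*"
      proof (intro ballI)
        fix u v assume uv: "u \<in> A1" "v \<in> D'"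
        have "(u,p') \<in> av\<^sup>*" using step(3) uv pq by blast
        moreover have "D' \<in> cls ` V" using ABsub pq(4) by blast
        then have "(q',v) \<in> RF\<^sup>*" using cls_RF pq(2) uv(2) by blast
        then have "(q',v) \<in> av\<^sup>*" by (rule RFav')
        ultimately show "(u,v) \<in> av\<^sup>*" using pqav
          by (meson rtrancl_into_rtrancl rtrancl_trans)
      qed
      show ?case using pq(4) all by blast
    qed
    have "(x,y) \<in> av\<^sup>*" using claim[OF A12] gd by blast
    then show False unfolding av_def using tree_cut[OF tree gd(5)] by blast
  qed
  show ?thesis unfolding AB_def[symmetric] G_def[symmetric] is_tree_def
    using finAB isg conn minimal by blast
qed

end
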